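(* Let $K\subseteq\mathbb{R}^d$ be compact. The following are equivalent: (a) $(\mathcal{J}^1(K),\|\cdot\|_{\mathcal{J}^1(K)})$ is a Banach space; (b) $(C^1(K),\|\cdot\|_{C^1(K)})$ is a Banach space; (c) for every $x\in K$ there is $C_x>0$ such that for all $f\in C^1(K)$ and all $y\in K\setminus\{x\}$, $\frac{|f(y)-f(x)|}{|y-x|}\le C_x\|f\|_{C^1(K)}$.
   Context: A continuous $df:K\to\mathbb{R}^d$ is a continuous derivative of $f:K\to\mathbb{R}$ on $K$ if $\lim_{y\to x,\,y\in K\setminus\{x\}}\frac{f(y)-f(x)-\langle df(x),y-x\rangle}{|y-x|}=0$ for all $x\in K$. $\mathcal{J}^1(K)=\{(f,df): df \text{ is a continuous derivative of } f \text{ on } K\}$ with norm $\|(f,df)\|_{\mathcal{J}^1(K)}=\|f\|_K+\|df\|_K$ ($\|\cdot\|_K$ the sup norm on $K$). $C^1(K)$ is the projection of $\mathcal{J}^1(K)$ onto the first coordinate, with the quotient norm $\|f\|_{C^1(K)}=\|f\|_K+\inf\{\|df\|_K: df \text{ a continuous derivative of } f\}$. *)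

theory Defs
  imports "HOL-Analysis.Analysis"
begin

definition supnorm :: "'a set \<Rightarrow> ('a \<Rightarrow> 'b::real_normed_vector) \<Rightarrow> real" where
  "supnorm K g = (if K = {} then 0 else (SUP x\<in>K. norm (g x)))"

definition cont_deriv_on :: "'a::euclidean_space set \<Rightarrow> ('a \<Rightarrow> real) \<Rightarrow> ('a \<Rightarrow> 'a) \<Rightarrow> bool" where
  "cont_deriv_on K f df \<longleftrightarrow> continuous_on K df \<and>
     (\<forall>x\<in>K. ((\<lambda>y. (f y - f x - inner (df x) (y - x)) / norm (y - x)) \<longlongrightarrow> 0) (at x within K))"

definition J1 :: "'a::euclidean_space set \<Rightarrow> (('a \<Rightarrow> real) \<times> ('a \<Rightarrow> 'a)) set" where
  "J1 K = {(f, df). cont_deriv_on K f df}"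

definition J1norm :: "'a::euclidean_space set \<Rightarrow> (('a \<Rightarrow> real) \<times> ('a \<Rightarrow> 'a)) \<Rightarrow> real" where
  "J1norm K p = supnorm K (fst p) + supnorm K (snd p)"

definition C1 :: "'a::euclidean_space set \<Rightarrow> ('a \<Rightarrow> real) set" where
  "C1 K = fst ` J1 K"

definition C1norm :: "'a::euclidean_space set \<Rightarrow> ('a \<Rightarrow> real) \<Rightarrow> real" where
  "C1norm K f = supnorm K f + (INF df\<in>{df. cont_deriv_on K f df}. supnorm K df)"

definition J1_banach :: "'a::euclidean_space set \<Rightarrow> bool" where
  "J1_banach K \<longleftrightarrow> (\<forall>s :: nat \<Rightarrow> ('a \<Rightarrow> real) \<times> ('a \<Rightarrow> 'a).
     (\<forall>n. s n \<in> J1 K) \<and>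
     (\<forall>e>0. \<exists>N. \<forall>m\<ge>N. \<forall>n\<ge>N.
        J1norm K (\<lambda>x. fst (s m) x - fst (s n) x, \<lambda>x. snd (s m) x - snd (s n) x) < e)
     \<longrightarrow> (\<exists>l\<in>J1 K. (\<lambda>n. J1norm K (\<lambda>x. fst (s n) x - fst l x, \<lambda>x. snd (s n) x - snd l x))
              \<longlonglongrightarrow> 0))"

definition C1_banach :: "'a::euclidean_space set \<Rightarrow> bool" where
  "C1_banach K \<longleftrightarrow> (\<forall>s :: nat \<Rightarrow> ('a \<Rightarrow> real).
     (\<forall>n. s n \<in> C1 K) \<and>
     (\<forall>e>0. \<exists>N. \<forall>m\<ge>N. \<forall>n\<ge>N. C1norm K (\<lambda>x. s m x - s n x) < e)
     \<longrightarrow> (\<exists>g\<in>C1 K. (\<lambda>n. C1norm K (\<lambda>x. s n x - g x)) \<longlonglongrightarrow> 0))"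

end

theory Submission
  imports Defs
begin

lemma supnorm_ge: "bounded (g ` K) \<Longrightarrow> y \<in> K \<Longrightarrow> norm (g y) \<le> supnorm K g"
proof -
  assume b: "bounded (g ` K)" and y: "y \<in> K"
  then obtain a where a: "\<forall>z\<in>K. norm (g z) \<le> a" by (auto simp: bounded_iff)
  have "bdd_above ((\<lambda>z. norm (g z)) ` K)" using a by (auto intro: bdd_aboveI2)
  then show ?thesis using y unfolding supnorm_def by (auto intro: cSUP_upper)
qed

lemma supnorm_le: "(\<And>y. y \<in> K \<Longrightarrow> norm (g y) \<le> B) \<Longrightarrow> 0 \<le> B \<Longrightarrow> supnorm K g \<le> B"
  unfolding supnorm_def by (simp add: cSUP_least)

lemma supnorm_nonneg:
  assumes h: "\<And>y. y \<in> K \<Longrightarrow> norm (g y) \<le> B" shows "0 \<le> supnorm K g"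
proof (cases "K = {}")
  case True then show ?thesis by (simp add: supnorm_def)
next
  case False
  then obtain y where y: "y \<in> K" by blast
  have b: "bounded (g ` K)" unfolding bounded_iff using h by (intro exI[of _ B]) auto
  have "norm (g y) \<le> supnorm K g" by (rule supnorm_ge[OF b y])
  then show ?thesis using norm_ge_zero[of "g y"] by linarith
qed

lemma supnorm_nonneg_b: assumes "bounded (g ` K)" shows "0 \<le> supnorm K g"
proof -
  obtain a where "\<forall>x\<in>g ` K. norm x \<le> a" using assms unfolding bounded_iff by blast
  then show ?thesis by (intro supnorm_nonneg[of K g a]) auto
qed

lemma supnorm_add: assumes "bounded (f ` K)" "bounded (g ` K)" shows
   "supnorm K (\<lambda>x. f x + g x) \<le> supnorm K f + supnorm K g"
proof (rule supnorm_le)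
  fix y assume y: "y \<in> K"
  have "norm (f y + g y) \<le> norm (f y) + norm (g y)" by (rule norm_triangle_ineq)
  also have "\<dots> \<le> supnorm K f + supnorm K g"
    by (rule add_mono; rule supnorm_ge[OF _ y]; fact)
  finally show "norm (f y + g y) \<le> supnorm K f + supnorm K g" .
next
  show "0 \<le> supnorm K f + supnorm K g" using supnorm_nonneg_b[OF assms(1)] supnorm_nonneg_b[OF assms(2)] by linarith
qed

lemma supnorm_diff: assumes "bounded (f ` K)" "bounded (g ` K)" shows
   "supnorm K (\<lambda>x. f x - g x) \<le> supnorm K f + supnorm K g"
proof (rule supnorm_le)
  fix y assume y: "y \<in> K"
  have "norm (f y - g y) \<le> norm (f y) + norm (g y)" by (rule norm_triangle_ineq4)
  also have "\<dots> \<le> supnorm K f + supnorm K g"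
    by (rule add_mono; rule supnorm_ge[OF _ y]; fact)
  finally show "norm (f y - g y) \<le> supnorm K f + supnorm K g" .
next
  show "0 \<le> supnorm K f + supnorm K g" using supnorm_nonneg_b[OF assms(1)] supnorm_nonneg_b[OF assms(2)] by linarith
qed

lemma supnorm_commute: "supnorm K (\<lambda>z. a z - b z) = supnorm K (\<lambda>z. b z - a z)"
  unfolding supnorm_def by (simp add: norm_minus_commute)

lemma cd_cont_f:
  assumes "cont_deriv_on K f df" shows "continuous_on K f"
  unfolding continuous_on_eq_continuous_within continuous_within
proof
  fix x assume x: "x \<in> K"
  define q where "q y = (f y - f x - inner (df x) (y - x)) / norm (y - x)" for y
  have q: "(q \<longlongrightarrow> 0) (at x within K)" using assms x unfolding cont_deriv_on_def q_def by auto
  have n: "((\<lambda>y. norm (y - x)) \<longlongrightarrow> 0) (at x within K)"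
    by (intro tendsto_eq_intros) auto
  have i: "((\<lambda>y. inner (df x) (y - x)) \<longlongrightarrow> 0) (at x within K)"
    by (intro tendsto_eq_intros) auto
  have "((\<lambda>y. q y * norm (y - x) + inner (df x) (y - x)) \<longlongrightarrow> 0 * 0 + 0) (at x within K)"
    by (intro tendsto_intros q n i)
  moreover have "\<forall>\<^sub>F y in at x within K. q y * norm (y - x) + inner (df x) (y - x) = f y - f x"
    unfolding eventually_at_filter by (auto simp: q_def)
  ultimately have "((\<lambda>y. f y - f x) \<longlongrightarrow> 0) (at x within K)"
    by (simp add: Lim_transform_eventually)
  then show "(f \<longlongrightarrow> f x) (at x within K)" by (simp add: LIM_zero_iff)
qed

lemma cd_bounded:
  assumes "compact K" "cont_deriv_on K f df"
  shows "bounded (f ` K)" "bounded (df ` K)"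
proof -
  have "continuous_on K f" by (rule cd_cont_f[OF assms(2)])
  then show "bounded (f ` K)" by (intro compact_imp_bounded compact_continuous_image assms(1))
  have "continuous_on K df" using assms(2) by (simp add: cont_deriv_on_def)
  then show "bounded (df ` K)" by (intro compact_imp_bounded compact_continuous_image assms(1))
qed

lemma cd_add:
  assumes "cont_deriv_on K f df" "cont_deriv_on K g dg"
  shows "cont_deriv_on K (\<lambda>x. f x + g x) (\<lambda>x. df x + dg x)"
  unfolding cont_deriv_on_def
proof (intro conjI ballI)
  show "continuous_on K (\<lambda>x. df x + dg x)" using assms by (intro continuous_on_add) (auto simp: cont_deriv_on_def)
  fix x assume x: "x \<in> K"
  have a: "((\<lambda>y. (f y - f x - inner (df x) (y - x)) / norm (y - x)) \<longlongrightarrow> 0) (at x within K)"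
    using assms(1) x by (auto simp: cont_deriv_on_def)
  have b: "((\<lambda>y. (g y - g x - inner (dg x) (y - x)) / norm (y - x)) \<longlongrightarrow> 0) (at x within K)"
    using assms(2) x by (auto simp: cont_deriv_on_def)
  have "((\<lambda>y. (f y - f x - inner (df x) (y - x)) / norm (y - x) + (g y - g x - inner (dg x) (y - x)) / norm (y - x)) \<longlongrightarrow> 0 + 0) (at x within K)"
    by (rule tendsto_add[OF a b])
  moreover have "(\<lambda>y. (f y - f x - inner (df x) (y - x)) / norm (y - x) + (g y - g x - inner (dg x) (y - x)) / norm (y - x))
     = (\<lambda>y. (f y + g y - (f x + g x) - inner (df x + dg x) (y - x)) / norm (y - x))"
    by (rule ext) (simp add: inner_add_left add_divide_distrib[symmetric] algebra_simps)
  ultimately show "((\<lambda>y. (f y + g y - (f x + g x) - inner (df x + dg x) (y - x)) / norm (y - x)) \<longlongrightarrow> 0) (at x within K)"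
    by simp
qed

lemma cd_scale:
  assumes "cont_deriv_on K f df"
  shows "cont_deriv_on K (\<lambda>x. c * f x) (\<lambda>x. c *\<^sub>R df x)"
  unfolding cont_deriv_on_def
proof (intro conjI ballI)
  show "continuous_on K (\<lambda>x. c *\<^sub>R df x)" using assms by (intro continuous_on_scaleR continuous_on_const) (auto simp: cont_deriv_on_def)
  fix x assume x: "x \<in> K"
  have a: "((\<lambda>y. (f y - f x - inner (df x) (y - x)) / norm (y - x)) \<longlongrightarrow> 0) (at x within K)"
    using assms(1) x by (auto simp: cont_deriv_on_def)
  have "((\<lambda>y. c * ((f y - f x - inner (df x) (y - x)) / norm (y - x))) \<longlongrightarrow> c * 0) (at x within K)"
    by (rule tendsto_mult_left[OF a])
  moreover have "(\<lambda>y. c * ((f y - f x - inner (df x) (y - x)) / norm (y - x)))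
     = (\<lambda>y. (c * f y - c * f x - inner (c *\<^sub>R df x) (y - x)) / norm (y - x))"
    by (rule ext) (simp add: algebra_simps)
  ultimately show "((\<lambda>y. (c * f y - c * f x - inner (c *\<^sub>R df x) (y - x)) / norm (y - x)) \<longlongrightarrow> 0) (at x within K)"
    by simp
qed

lemma cd_diff:
  assumes "cont_deriv_on K f df" "cont_deriv_on K g dg"
  shows "cont_deriv_on K (\<lambda>x. f x - g x) (\<lambda>x. df x - dg x)"
proof -
  have "cont_deriv_on K (\<lambda>x. f x + (-1) * g x) (\<lambda>x. df x + (-1) *\<^sub>R dg x)"
    by (intro cd_add cd_scale assms)
  moreover have "(\<lambda>x. f x + (-1) * g x) = (\<lambda>x. f x - g x)" "(\<lambda>x. df x + (-1) *\<^sub>R dg x) = (\<lambda>x. df x - dg x)"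
    by auto
  ultimately show ?thesis by simp
qed

lemma cd_zero: "cont_deriv_on K (\<lambda>x. 0) (\<lambda>x. 0)"
  unfolding cont_deriv_on_def by simp

lemma C1_iff: "f \<in> C1 K \<longleftrightarrow> (\<exists>df. cont_deriv_on K f df)"
  unfolding C1_def J1_def by force

lemma J1_iff: "p \<in> J1 K \<longleftrightarrow> cont_deriv_on K (fst p) (snd p)"
  unfolding J1_def by (cases p) auto

lemma D_bdd:
  assumes "compact K" shows "bdd_below ((\<lambda>df. supnorm K df) ` {df. cont_deriv_on K f df})"
proof (rule bdd_belowI2[of _ 0])
  fix df assume "df \<in> {df. cont_deriv_on K f df}"
  then show "0 \<le> supnorm K df" using supnorm_nonneg_b cd_bounded(2)[OF assms] by blast
qed

lemma C1norm_le:
  assumes "compact K" "cont_deriv_on K f df"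
  shows "C1norm K f \<le> supnorm K f + supnorm K df"
proof -
  have "(INF df\<in>{df. cont_deriv_on K f df}. supnorm K df) \<le> supnorm K df"
    by (rule cINF_lower[OF D_bdd[OF assms(1)]]) (use assms(2) in simp)
  then show ?thesis unfolding C1norm_def by linarith
qed

lemma INF_nonneg:
  assumes "compact K" "cont_deriv_on K f df0"
  shows "0 \<le> (INF df\<in>{df. cont_deriv_on K f df}. supnorm K df)"
proof (rule cINF_greatest)
  show "{df. cont_deriv_on K f df} \<noteq> {}" using assms(2) by blast
  fix df assume "df \<in> {df. cont_deriv_on K f df}"
  then show "0 \<le> supnorm K df" using supnorm_nonneg_b cd_bounded(2)[OF assms(1)] by blast
qed

lemma C1norm_approx:
  assumes "compact K" "f \<in> C1 K" "e > 0"
  shows "\<exists>df. cont_deriv_on K f df \<and> supnorm K f + supnorm K df < C1norm K f + e"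
proof -
  let ?I = "(INF df\<in>{df. cont_deriv_on K f df}. supnorm K df)"
  have "?I < ?I + e" using assms(3) by simp
  moreover have "{df. cont_deriv_on K f df} \<noteq> {}" using assms(2) C1_iff by blast
  ultimately obtain df where "df \<in> {df. cont_deriv_on K f df}" "supnorm K df < ?I + e"
    using cINF_less_iff[OF _ D_bdd[OF assms(1)]] by blast
  then show ?thesis unfolding C1norm_def by (intro exI[of _ df]) auto
qed

lemma sup_le_C1:
  assumes "compact K" "f \<in> C1 K"
  shows "supnorm K f \<le> C1norm K f"
proof -
  obtain df where "cont_deriv_on K f df" using assms(2) C1_iff by blast
  from INF_nonneg[OF assms(1) this] show ?thesis unfolding C1norm_def by linarith
qed

lemma C1norm_nonneg:
  assumes "compact K" "f \<in> C1 K"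
  shows "0 \<le> C1norm K f"
proof -
  obtain df where df: "cont_deriv_on K f df" using assms(2) C1_iff by blast
  have "0 \<le> supnorm K f" by (rule supnorm_nonneg_b[OF cd_bounded(1)[OF assms(1) df]])
  then show ?thesis using sup_le_C1[OF assms] by linarith
qed

lemma pt_le_C1:
  assumes "compact K" "f \<in> C1 K" "y \<in> K"
  shows "\<bar>f y\<bar> \<le> C1norm K f"
proof -
  obtain df where df: "cont_deriv_on K f df" using assms(2) C1_iff by blast
  have "norm (f y) \<le> supnorm K f" by (rule supnorm_ge[OF cd_bounded(1)[OF assms(1) df] assms(3)])
  then show ?thesis using sup_le_C1[OF assms(1,2)] by simp
qed

lemma C1_add: "f \<in> C1 K \<Longrightarrow> g \<in> C1 K \<Longrightarrow> (\<lambda>z. f z + g z) \<in> C1 K"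
  unfolding C1_iff using cd_add by blast
lemma C1_diff: "f \<in> C1 K \<Longrightarrow> g \<in> C1 K \<Longrightarrow> (\<lambda>z. f z - g z) \<in> C1 K"
  unfolding C1_iff using cd_diff by blast
lemma C1_scale: "f \<in> C1 K \<Longrightarrow> (\<lambda>z. c * f z) \<in> C1 K"
  unfolding C1_iff using cd_scale by blast

lemma C1norm_add:
  assumes K: "compact K" and f: "f \<in> C1 K" and g: "g \<in> C1 K"
  shows "C1norm K (\<lambda>z. f z + g z) \<le> C1norm K f + C1norm K g"
proof (rule field_le_epsilon)
  fix e :: real assume e: "0 < e"
  obtain df where df: "cont_deriv_on K f df" "supnorm K f + supnorm K df < C1norm K f + e/2"
    using C1norm_approx[OF K f, of "e/2"] e by auto
  obtain dg where dg: "cont_deriv_on K g dg" "supnorm K g + supnorm K dg < C1norm K g + e/2"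
    using C1norm_approx[OF K g, of "e/2"] e by auto
  have "C1norm K (\<lambda>z. f z + g z) \<le> supnorm K (\<lambda>z. f z + g z) + supnorm K (\<lambda>z. df z + dg z)"
    by (rule C1norm_le[OF K cd_add[OF df(1) dg(1)]])
  moreover have "supnorm K (\<lambda>z. f z + g z) \<le> supnorm K f + supnorm K g"
    by (rule supnorm_add; rule cd_bounded[OF K]; fact)
  moreover have "supnorm K (\<lambda>z. df z + dg z) \<le> supnorm K df + supnorm K dg"
    by (rule supnorm_add; rule cd_bounded[OF K]; fact)
  ultimately show "C1norm K (\<lambda>z. f z + g z) \<le> C1norm K f + C1norm K g + e"
    using df(2) dg(2) by linarith
qed

lemma supnorm_scale:
  fixes g :: "'a \<Rightarrow> 'b::real_normed_vector"
  assumes "bounded (g ` K)"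
  shows "supnorm K (\<lambda>z. c *\<^sub>R g z) \<le> \<bar>c\<bar> * supnorm K g"
proof (rule supnorm_le)
  fix y assume y: "y \<in> K"
  have "norm (g y) \<le> supnorm K g" by (rule supnorm_ge[OF assms y])
  then show "norm (c *\<^sub>R g y) \<le> \<bar>c\<bar> * supnorm K g" by (simp add: mult_left_mono)
next
  show "0 \<le> \<bar>c\<bar> * supnorm K g" using supnorm_nonneg_b[OF assms] by simp
qed

lemma C1norm_scale:
  assumes K: "compact K" and f: "f \<in> C1 K"
  shows "C1norm K (\<lambda>z. c * f z) \<le> \<bar>c\<bar> * C1norm K f"
proof (rule field_le_epsilon)
  fix e :: real assume e: "0 < e"
  define e' where "e' = e / (\<bar>c\<bar> + 1)"
  have e': "0 < e'" using e by (simp add: e'_def)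
  have ce: "\<bar>c\<bar> * e' \<le> e" unfolding e'_def using e by (simp add: field_simps)
  obtain df where df: "cont_deriv_on K f df" "supnorm K f + supnorm K df < C1norm K f + e'"
    using C1norm_approx[OF K f e'] by auto
  have "C1norm K (\<lambda>z. c * f z) \<le> supnorm K (\<lambda>z. c * f z) + supnorm K (\<lambda>z. c *\<^sub>R df z)"
    by (rule C1norm_le[OF K cd_scale[OF df(1)]])
  moreover have "supnorm K (\<lambda>z. c * f z) \<le> \<bar>c\<bar> * supnorm K f"
    using supnorm_scale[OF cd_bounded(1)[OF K df(1)], of c] by simp
  moreover have "supnorm K (\<lambda>z. c *\<^sub>R df z) \<le> \<bar>c\<bar> * supnorm K df"
    by (rule supnorm_scale[OF cd_bounded(2)[OF K df(1)]])
  moreover have "\<bar>c\<bar> * (supnorm K f + supnorm K df) \<le> \<bar>c\<bar> * (C1norm K f + e')"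
    using df(2) by (intro mult_left_mono) auto
  ultimately show "C1norm K (\<lambda>z. c * f z) \<le> \<bar>c\<bar> * C1norm K f + e"
    using ce by (simp add: algebra_simps)
qed

lemma C1norm_commute:
  assumes K: "compact K" and f: "f \<in> C1 K" and g: "g \<in> C1 K"
  shows "C1norm K (\<lambda>z. g z - f z) = C1norm K (\<lambda>z. f z - g z)"
proof -
  have *: "C1norm K (\<lambda>z. b z - a z) \<le> C1norm K (\<lambda>z. a z - b z)" if "a \<in> C1 K" "b \<in> C1 K" for a b
  proof -
    have "C1norm K (\<lambda>z. (-1) * (a z - b z)) \<le> \<bar>-1\<bar> * C1norm K (\<lambda>z. a z - b z)"
      by (rule C1norm_scale[OF K C1_diff[OF that]])
    moreover have "(\<lambda>z. (-1) * (a z - b z)) = (\<lambda>z. b z - a z)" by auto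
    ultimately show ?thesis by simp
  qed
  show ?thesis using *[OF f g] *[OF g f] by linarith
qed

lemma C1norm_zero: assumes K: "compact K" shows "C1norm K (\<lambda>z. 0) \<le> 0"
proof -
  have "C1norm K (\<lambda>z. 0) \<le> supnorm K (\<lambda>z. 0::real) + supnorm K (\<lambda>z. 0::'a)"
    by (rule C1norm_le[OF K cd_zero])
  moreover have "supnorm K (\<lambda>z. 0::real) \<le> 0" by (rule supnorm_le) auto
  moreover have "supnorm K (\<lambda>z. 0::'a) \<le> 0" by (rule supnorm_le) auto
  ultimately show ?thesis by linarith
qed

lemma geom_eq: "n \<le> m \<Longrightarrow> (\<Sum>j\<in>{n..<m}. (1/2::real)^j) = 2 * ((1/2)^n - (1/2)^m)"
proof (induction m rule: dec_induct)
  case base then show ?case by simp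
next
  case (step k)
  then show ?case by (simp add: sum.atLeastLessThan_Suc algebra_simps)
qed

lemma geom_le: "(\<Sum>j\<in>{n..<m}. (1/2::real)^j) \<le> 2 * (1/2)^n"
proof (cases "n \<le> m")
  case True then show ?thesis using geom_eq[OF True] by simp
next
  case False then show ?thesis by simp
qed

lemma tele_C1:
  assumes S0: "S 0 \<in> C1 K" and h: "\<And>j. h j \<in> C1 K" and S: "\<And>k. S (Suc k) = (\<lambda>z. S k z + h k z)"
  shows "S k \<in> C1 K"
proof (induction k)
  case 0 then show ?case by (rule S0)
next
  case (Suc k) then show ?case unfolding S by (rule C1_add[OF _ h])
qed

lemma tele_norm:
  assumes K: "compact K" and S0: "S 0 \<in> C1 K" and h: "\<And>j. h j \<in> C1 K" and S: "\<And>k. S (Suc k) = (\<lambda>z. S k z + h k z)"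
    and nm: "n \<le> m"
  shows "C1norm K (\<lambda>z. S m z - S n z) \<le> (\<Sum>j\<in>{n..<m}. C1norm K (h j))"
  using nm
proof (induction m rule: dec_induct)
  case base then show ?case using C1norm_zero[OF K] by simp
next
  case (step k)
  have SC: "\<And>k. S k \<in> C1 K" by (rule tele_C1[OF S0 h S])
  have "(\<lambda>z. S (Suc k) z - S n z) = (\<lambda>z. (S k z - S n z) + h k z)" unfolding S by auto
  then have "C1norm K (\<lambda>z. S (Suc k) z - S n z) \<le> C1norm K (\<lambda>z. S k z - S n z) + C1norm K (h k)"
    using C1norm_add[OF K C1_diff[OF SC SC] h] by simp
  then show ?case using step(3) step(1) by (simp add: sum.atLeastLessThan_Suc)
qed

lemma quot_bounded:
  assumes K: "compact K" and f: "f \<in> C1 K" and x: "x \<in> K"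
  shows "\<exists>M. \<forall>y\<in>K - {x}. \<bar>f y - f x\<bar> / norm (y - x) \<le> M"
proof -
  obtain df where df: "cont_deriv_on K f df" using f C1_iff by blast
  have lim: "((\<lambda>y. (f y - f x - inner (df x) (y - x)) / norm (y - x)) \<longlongrightarrow> 0) (at x within K)"
    using df x by (auto simp: cont_deriv_on_def)
  have "\<forall>\<^sub>F y in at x within K. dist ((f y - f x - inner (df x) (y - x)) / norm (y - x)) 0 < 1"
    by (rule tendstoD[OF lim]) simp
  then obtain d where d: "d > 0" and dd: "\<And>y. y \<in> K \<Longrightarrow> y \<noteq> x \<Longrightarrow> dist y x < d \<Longrightarrow>
      \<bar>(f y - f x - inner (df x) (y - x)) / norm (y - x)\<bar> < 1"
    unfolding eventually_at by auto
  obtain B where B: "\<And>y. y \<in> K \<Longrightarrow> norm (f y) \<le> B"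
    using cd_bounded(1)[OF K df] unfolding bounded_iff by auto
  show ?thesis
  proof (intro exI[of _ "max (1 + norm (df x)) (2 * B / d)"] ballI)
    fix y assume y: "y \<in> K - {x}"
    have n: "norm (y - x) > 0" using y by auto
    show "\<bar>f y - f x\<bar> / norm (y - x) \<le> max (1 + norm (df x)) (2 * B / d)"
    proof (cases "dist y x < d")
      case True
      have q: "\<bar>f y - f x - inner (df x) (y - x)\<bar> / norm (y - x) < 1"
      proof -
        have "\<bar>(f y - f x - inner (df x) (y - x)) / norm (y - x)\<bar> < 1"
          by (rule dd) (use y True in auto)
        then show ?thesis by (simp add: abs_divide)
      qed
      have i: "\<bar>inner (df x) (y - x)\<bar> \<le> norm (df x) * norm (y - x)" by (rule Cauchy_Schwarz_ineq2)
      have "\<bar>f y - f x\<bar> \<le> \<bar>f y - f x - inner (df x) (y - x)\<bar> + \<bar>inner (df x) (y - x)\<bar>" by linarith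
      also have "\<dots> \<le> norm (y - x) + norm (df x) * norm (y - x)"
        using q i n by (simp add: divide_less_eq)
      finally have "\<bar>f y - f x\<bar> \<le> (1 + norm (df x)) * norm (y - x)" by (simp add: algebra_simps)
      then have "\<bar>f y - f x\<bar> / norm (y - x) \<le> 1 + norm (df x)" using n by (simp add: divide_le_eq)
      then show ?thesis by linarith
    next
      case False
      then have dn: "d \<le> norm (y - x)" by (simp add: dist_norm)
      have "\<bar>f y - f x\<bar> \<le> 2 * B" using B[of y] B[of x] y x by auto
      then have "\<bar>f y - f x\<bar> / norm (y - x) \<le> 2 * B / norm (y - x)" using n by (simp add: divide_right_mono)
      also have "\<dots> \<le> 2 * B / d"
      proof -
        have "0 \<le> B" using B[of x] x norm_ge_zero[of "f x"] by linarith
        then show ?thesis using d dn n by (intro divide_left_mono) auto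
      qed
      finally show ?thesis by linarith
    qed
  qed
qed

lemma unif_cauchy_lim:
  fixes F :: "nat \<Rightarrow> 'c \<Rightarrow> 'b::banach"
  assumes c: "\<And>e. e > 0 \<Longrightarrow> \<exists>N. \<forall>m\<ge>N. \<forall>n\<ge>N. \<forall>z\<in>K. norm (F m z - F n z) < e"
  shows "\<And>z. z \<in> K \<Longrightarrow> (\<lambda>n. F n z) \<longlonglongrightarrow> lim (\<lambda>n. F n z)"
    and "\<And>e. e > 0 \<Longrightarrow> \<exists>N. \<forall>n\<ge>N. \<forall>z\<in>K. norm (F n z - lim (\<lambda>m. F m z)) \<le> e"
proof -
  fix z assume z: "z \<in> K"
  have "Cauchy (\<lambda>n. F n z)"
  proof (rule metric_CauchyI)
    fix e :: real assume "0 < e"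
    then obtain N where "\<forall>m\<ge>N. \<forall>n\<ge>N. \<forall>z\<in>K. norm (F m z - F n z) < e" using c by blast
    then show "\<exists>M. \<forall>m\<ge>M. \<forall>n\<ge>M. dist (F m z) (F n z) < e" using z by (auto simp: dist_norm)
  qed
  then show "(\<lambda>n. F n z) \<longlonglongrightarrow> lim (\<lambda>n. F n z)"
    using Cauchy_convergent_iff convergent_LIMSEQ_iff by blast
  note conv = this
next
  have conv: "(\<lambda>n. F n z) \<longlonglongrightarrow> lim (\<lambda>n. F n z)" if z: "z \<in> K" for z
  proof -
    have "Cauchy (\<lambda>n. F n z)"
    proof (rule metric_CauchyI)
      fix e :: real assume "0 < e"
      then obtain N where "\<forall>m\<ge>N. \<forall>n\<ge>N. \<forall>z\<in>K. norm (F m z - F n z) < e" using c by blast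
      then show "\<exists>M. \<forall>m\<ge>M. \<forall>n\<ge>M. dist (F m z) (F n z) < e" using z by (auto simp: dist_norm)
    qed
    then show ?thesis using Cauchy_convergent_iff convergent_LIMSEQ_iff by blast
  qed
  fix e :: real assume e: "e > 0"
  then obtain N where N: "\<forall>m\<ge>N. \<forall>n\<ge>N. \<forall>z\<in>K. norm (F m z - F n z) < e" using c by blast
  show "\<exists>N. \<forall>n\<ge>N. \<forall>z\<in>K. norm (F n z - lim (\<lambda>m. F m z)) \<le> e"
  proof (intro exI[of _ N] allI impI ballI)
    fix n z assume n: "N \<le> n" and z: "z \<in> K"
    have "(\<lambda>m. norm (F n z - F m z)) \<longlonglongrightarrow> norm (F n z - lim (\<lambda>m. F m z))"
      by (intro tendsto_intros conv z)
    moreover have "\<exists>M. \<forall>m\<ge>M. norm (F n z - F m z) \<le> e"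
      using N n z by (intro exI[of _ N]) (auto intro: less_imp_le)
    ultimately show "norm (F n z - lim (\<lambda>m. F m z)) \<le> e" by (rule LIMSEQ_le_const2)
  qed
qed

lemma c_imp_a:
  assumes K: "compact K"
    and c: "\<forall>x\<in>K. \<exists>C>0. \<forall>f\<in>C1 K. \<forall>y\<in>K - {x}. \<bar>f y - f x\<bar> / norm (y - x) \<le> C * C1norm K f"
  shows "J1_banach K"
  unfolding J1_banach_def
proof (intro allI impI)
  fix s :: "nat \<Rightarrow> ('a \<Rightarrow> real) \<times> ('a \<Rightarrow> 'a)"
  assume as: "(\<forall>n. s n \<in> J1 K) \<and> (\<forall>e>0. \<exists>N. \<forall>m\<ge>N. \<forall>n\<ge>N.
        J1norm K (\<lambda>x. fst (s m) x - fst (s n) x, \<lambda>x. snd (s m) x - snd (s n) x) < e)"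
  define F where "F n = fst (s n)" for n
  define G where "G n = snd (s n)" for n
  have cd: "cont_deriv_on K (F n) (G n)" for n
  proof -
    have "s n \<in> J1 K" using as by blast
    then show ?thesis unfolding J1_iff F_def G_def .
  qed
  have cdd: "cont_deriv_on K (\<lambda>z. F m z - F n z) (\<lambda>z. G m z - G n z)" for m n
    by (rule cd_diff[OF cd cd])
  have key: "\<exists>N. \<forall>m\<ge>N. \<forall>n\<ge>N. (\<forall>z\<in>K. norm (F m z - F n z) < e \<and> norm (G m z - G n z) < e)
      \<and> C1norm K (\<lambda>z. F m z - F n z) < e" if e: "e > 0" for e
  proof -
    obtain N where N: "\<forall>m\<ge>N. \<forall>n\<ge>N. supnorm K (\<lambda>z. F m z - F n z) + supnorm K (\<lambda>z. G m z - G n z) < e"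
      using as e unfolding J1norm_def F_def G_def by auto
    show ?thesis
    proof (intro exI[of _ N] allI impI conjI ballI)
      fix m n z assume m: "N \<le> m" and n: "N \<le> n" and z: "z \<in> K"
      have s: "supnorm K (\<lambda>z. F m z - F n z) + supnorm K (\<lambda>z. G m z - G n z) < e" using N m n by blast
      have a: "norm (F m z - F n z) \<le> supnorm K (\<lambda>z. F m z - F n z)"
        by (rule supnorm_ge[OF cd_bounded(1)[OF K cdd] z])
      have b: "norm (G m z - G n z) \<le> supnorm K (\<lambda>z. G m z - G n z)"
        by (rule supnorm_ge[OF cd_bounded(2)[OF K cdd] z])
      have a0: "0 \<le> supnorm K (\<lambda>z. F m z - F n z)" by (rule supnorm_nonneg_b[OF cd_bounded(1)[OF K cdd]])
      have b0: "0 \<le> supnorm K (\<lambda>z. G m z - G n z)" by (rule supnorm_nonneg_b[OF cd_bounded(2)[OF K cdd]])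
      show "norm (F m z - F n z) < e" using s a b0 by linarith
      show "norm (G m z - G n z) < e" using s b a0 by linarith
    next
      fix m n assume m: "N \<le> m" and n: "N \<le> n"
      have s: "supnorm K (\<lambda>z. F m z - F n z) + supnorm K (\<lambda>z. G m z - G n z) < e" using N m n by blast
      have "C1norm K (\<lambda>z. F m z - F n z) \<le> supnorm K (\<lambda>z. F m z - F n z) + supnorm K (\<lambda>z. G m z - G n z)"
        by (rule C1norm_le[OF K cdd])
      then show "C1norm K (\<lambda>z. F m z - F n z) < e" using s by linarith
    qed
  qed
  have cF: "\<exists>N. \<forall>m\<ge>N. \<forall>n\<ge>N. \<forall>z\<in>K. norm (F m z - F n z) < e" if "e > 0" for e
    using key[OF that] by blast
  have cG: "\<exists>N. \<forall>m\<ge>N. \<forall>n\<ge>N. \<forall>z\<in>K. norm (G m z - G n z) < e" if "e > 0" for e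
    using key[OF that] by blast
  define f where "f z = lim (\<lambda>n. F n z)" for z
  define g where "g z = lim (\<lambda>n. G n z)" for z
  have Fl: "\<And>z. z \<in> K \<Longrightarrow> (\<lambda>n. F n z) \<longlonglongrightarrow> f z" unfolding f_def by (rule unif_cauchy_lim(1)[OF cF])
  have Fu: "\<exists>N. \<forall>n\<ge>N. \<forall>z\<in>K. norm (F n z - f z) \<le> e" if "e > 0" for e
    unfolding f_def by (rule unif_cauchy_lim(2)[OF cF that])
  have Gu: "\<exists>N. \<forall>n\<ge>N. \<forall>z\<in>K. norm (G n z - g z) \<le> e" if "e > 0" for e
    unfolding g_def by (rule unif_cauchy_lim(2)[OF cG that])
  have gc: "continuous_on K g"
  proof (rule uniform_limit_theorem[where F = sequentially and f = G])
    show "\<forall>\<^sub>F n in sequentially. continuous_on K (G n)" using cd by (simp add: cont_deriv_on_def)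
    show "uniform_limit K G g sequentially" unfolding uniform_limit_sequentially_iff
    proof (intro allI impI)
      fix e :: real assume e: "e > 0"
      then obtain N where N: "\<forall>n\<ge>N. \<forall>z\<in>K. norm (G n z - g z) \<le> e/2" using Gu[of "e/2"] by auto
      show "\<exists>N. \<forall>n\<ge>N. \<forall>x\<in>K. dist (G n x) (g x) < e"
        using N e by (intro exI[of _ N]) (force simp: dist_norm)
    qed
  qed simp
  have deriv: "((\<lambda>y. (f y - f x - inner (g x) (y - x)) / norm (y - x)) \<longlongrightarrow> 0) (at x within K)"
    if x: "x \<in> K" for x
  proof -
    obtain C where C: "C > 0" "\<forall>h\<in>C1 K. \<forall>y\<in>K - {x}. \<bar>h y - h x\<bar> / norm (y - x) \<le> C * C1norm K h"
      using c x by blast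
    show ?thesis
    proof (rule tendstoI)
      fix eps :: real assume eps: "eps > 0"
      define e where "e = eps / (C + 3)"
      have e: "e > 0" using eps C by (simp add: e_def)
      have ee: "(C + 2) * e < eps" using eps C by (simp add: e_def field_simps)
      obtain N1 where N1: "\<forall>m\<ge>N1. \<forall>n\<ge>N1. (\<forall>z\<in>K. norm (F m z - F n z) < e \<and> norm (G m z - G n z) < e)
          \<and> C1norm K (\<lambda>z. F m z - F n z) < e" using key[OF e] by blast
      obtain N2 where N2: "\<forall>n\<ge>N2. \<forall>z\<in>K. norm (G n z - g z) \<le> e" using Gu[OF e] by blast
      define n where "n = max N1 N2"
      have A: "\<bar>(f y - F n y) - (f x - F n x)\<bar> / norm (y - x) \<le> C * e" if y: "y \<in> K - {x}" for y
      proof -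
        have "(\<lambda>m. \<bar>(F m y - F n y) - (F m x - F n x)\<bar> / norm (y - x)) \<longlonglongrightarrow> \<bar>(f y - F n y) - (f x - F n x)\<bar> / norm (y - x)"
          using y x by (intro tendsto_intros Fl) auto
        moreover have "\<exists>M. \<forall>m\<ge>M. \<bar>(F m y - F n y) - (F m x - F n x)\<bar> / norm (y - x) \<le> C * e"
        proof (intro exI[of _ N1] allI impI)
          fix m assume m: "N1 \<le> m"
          have h: "(\<lambda>z. F m z - F n z) \<in> C1 K" using C1_iff cdd by blast
          have "\<bar>(F m y - F n y) - (F m x - F n x)\<bar> / norm (y - x) \<le> C * C1norm K (\<lambda>z. F m z - F n z)"
            using C(2)[rule_format, OF h y] by simp
          also have "\<dots> \<le> C * e"
          proof -
            have "N1 \<le> n" by (simp add: n_def)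
            then have "C1norm K (\<lambda>z. F m z - F n z) < e" using N1 m by blast
            then show ?thesis using C(1) by (intro mult_left_mono) auto
          qed
          finally show "\<bar>(F m y - F n y) - (F m x - F n x)\<bar> / norm (y - x) \<le> C * e" .
        qed
        ultimately show ?thesis by (rule LIMSEQ_le_const2)
      qed
      have gn: "norm (g x - G n x) \<le> e" using N2 x unfolding n_def by (simp add: norm_minus_commute)
      have "((\<lambda>y. (F n y - F n x - inner (G n x) (y - x)) / norm (y - x)) \<longlongrightarrow> 0) (at x within K)"
        using cd[of n] x by (auto simp: cont_deriv_on_def)
      then have ev: "\<forall>\<^sub>F y in at x within K. dist ((F n y - F n x - inner (G n x) (y - x)) / norm (y - x)) 0 < e"
        by (rule tendstoD) (rule e)
      have ev2: "\<forall>\<^sub>F y in at x within K. y \<in> K - {x}"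
        unfolding eventually_at_filter by auto
      show "\<forall>\<^sub>F y in at x within K. dist ((f y - f x - inner (g x) (y - x)) / norm (y - x)) 0 < eps"
        using ev ev2
      proof eventually_elim
        case (elim y)
        have ny: "norm (y - x) > 0" using elim(2) by auto
        define qn where "qn = (F n y - F n x - inner (G n x) (y - x)) / norm (y - x)"
        define r where "r = ((f y - F n y) - (f x - F n x)) / norm (y - x)"
        define t where "t = inner (g x - G n x) (y - x) / norm (y - x)"
        have eq: "(f y - f x - inner (g x) (y - x)) / norm (y - x) = qn + r - t"
          unfolding qn_def r_def t_def using ny by (simp add: field_simps inner_diff_left)
        have "\<bar>qn\<bar> < e" using elim(1) unfolding qn_def by simp
        moreover have "\<bar>r\<bar> \<le> C * e" using A[OF elim(2)] unfolding r_def by (simp add: abs_divide)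
        moreover have "\<bar>t\<bar> \<le> e"
        proof -
          have "\<bar>inner (g x - G n x) (y - x)\<bar> \<le> norm (g x - G n x) * norm (y - x)" by (rule Cauchy_Schwarz_ineq2)
          also have "\<dots> \<le> e * norm (y - x)" using gn by (intro mult_right_mono) auto
          finally show ?thesis unfolding t_def using ny by (simp add: abs_divide divide_le_eq)
        qed
        ultimately have "\<bar>qn + r - t\<bar> < (C + 2) * e" by (simp add: algebra_simps)
        then show ?case using eq ee by simp
      qed
    qed
  qed
  show "\<exists>l\<in>J1 K. (\<lambda>n. J1norm K (\<lambda>x. fst (s n) x - fst l x, \<lambda>x. snd (s n) x - snd l x)) \<longlonglongrightarrow> 0"
  proof (intro bexI[of _ "(f, g)"])
    show "(f, g) \<in> J1 K" unfolding J1_iff cont_deriv_on_def using gc deriv by simp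
    show "(\<lambda>n. J1norm K (\<lambda>x. fst (s n) x - fst (f, g) x, \<lambda>x. snd (s n) x - snd (f, g) x)) \<longlonglongrightarrow> 0"
    proof (rule LIMSEQ_I)
      fix r :: real assume rpos: "r > 0"
      obtain N1 where N1: "\<forall>n\<ge>N1. \<forall>z\<in>K. norm (F n z - f z) \<le> r/3" using Fu[of "r/3"] rpos by auto
      obtain N2 where N2: "\<forall>n\<ge>N2. \<forall>z\<in>K. norm (G n z - g z) \<le> r/3" using Gu[of "r/3"] rpos by auto
      show "\<exists>no. \<forall>n\<ge>no. norm (J1norm K (\<lambda>x. fst (s n) x - fst (f, g) x, \<lambda>x. snd (s n) x - snd (f, g) x) - 0) < r"
      proof (intro exI[of _ "max N1 N2"] allI impI)
        fix n assume n: "max N1 N2 \<le> n"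
        have b1: "\<And>z. z \<in> K \<Longrightarrow> norm (F n z - f z) \<le> r/3" using N1 n by auto
        have b2: "\<And>z. z \<in> K \<Longrightarrow> norm (G n z - g z) \<le> r/3" using N2 n by auto
        have r3: "0 \<le> r/3" using rpos by simp
        have "supnorm K (\<lambda>z. F n z - f z) \<le> r/3" by (rule supnorm_le[OF b1 r3])
        moreover have "supnorm K (\<lambda>z. G n z - g z) \<le> r/3" by (rule supnorm_le[OF b2 r3])
        moreover have "0 \<le> supnorm K (\<lambda>z. F n z - f z)" by (rule supnorm_nonneg[OF b1])
        moreover have "0 \<le> supnorm K (\<lambda>z. G n z - g z)" by (rule supnorm_nonneg[OF b2])
        ultimately show "norm (J1norm K (\<lambda>x. fst (s n) x - fst (f, g) x, \<lambda>x. snd (s n) x - snd (f, g) x) - 0) < r"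
          unfolding J1norm_def F_def[symmetric] G_def[symmetric] using rpos by simp
      qed
    qed
  qed
qed

lemma half_pow_small: "e > 0 \<Longrightarrow> \<exists>M. (1/2::real)^M < e"
  using real_arch_pow_inv[of e "1/2"] by simp

lemma half_pow_mono: "M \<le> n \<Longrightarrow> (1/2::real)^n \<le> (1/2)^M"
  by (rule power_decreasing) auto

lemma a_imp_b:
  assumes K: "compact K" and a: "J1_banach K"
  shows "C1_banach K"
  unfolding C1_banach_def
proof (intro allI impI)
  fix s :: "nat \<Rightarrow> 'a \<Rightarrow> real"
  assume as: "(\<forall>n. s n \<in> C1 K) \<and> (\<forall>e>0. \<exists>N. \<forall>m\<ge>N. \<forall>n\<ge>N. C1norm K (\<lambda>x. s m x - s n x) < e)"
  have sC: "\<And>n. s n \<in> C1 K" using as by blast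
  define N where "N k = (SOME N. \<forall>m\<ge>N. \<forall>n\<ge>N. C1norm K (\<lambda>x. s m x - s n x) < (1/2::real)^k)" for k
  have NP: "\<forall>m\<ge>N k. \<forall>n\<ge>N k. C1norm K (\<lambda>x. s m x - s n x) < (1/2::real)^k" for k
  proof -
    have "\<exists>N. \<forall>m\<ge>N. \<forall>n\<ge>N. C1norm K (\<lambda>x. s m x - s n x) < (1/2::real)^k"
      using as by simp
    then show ?thesis unfolding N_def by (rule someI_ex)
  qed
  define r where "r = rec_nat (N 0) (\<lambda>k rk. max rk (N (Suc k)))"
  have r0: "r 0 = N 0" and rS: "\<And>k. r (Suc k) = max (r k) (N (Suc k))" by (simp_all add: r_def)
  have rN: "N k \<le> r k" for k by (cases k) (simp_all add: r0 rS)
  have rmono: "r n \<le> r m" if "n \<le> m" for n m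
    by (rule lift_Suc_mono_le[of r, OF _ that]) (simp add: rS)
  have rr: "C1norm K (\<lambda>x. s m x - s n x) < (1/2)^k" if "r k \<le> m" "r k \<le> n" for k m n
    using NP[of k] rN[of k] that by auto
  define e where "e k = (\<lambda>z. s (r (Suc k)) z - s (r k) z)" for k
  have eC: "e k \<in> C1 K" for k unfolding e_def by (rule C1_diff[OF sC sC])
  have en: "C1norm K (e k) < (1/2)^k" for k unfolding e_def
    using rr[of k "r (Suc k)" "r k"] rmono[of k "Suc k"] by simp
  define \<delta> where "\<delta> k = (SOME d. cont_deriv_on K (e k) d \<and> supnorm K d < 2 * (1/2::real)^k)" for k
  have \<delta>P: "cont_deriv_on K (e k) (\<delta> k) \<and> supnorm K (\<delta> k) < 2 * (1/2::real)^k" for k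
  proof -
    obtain d where d: "cont_deriv_on K (e k) d" "supnorm K (e k) + supnorm K d < C1norm K (e k) + (1/2)^k"
      using C1norm_approx[OF K eC, of "(1/2)^k"] by auto
    have "0 \<le> supnorm K (e k)" by (rule supnorm_nonneg_b[OF cd_bounded(1)[OF K d(1)]])
    then have "cont_deriv_on K (e k) d \<and> supnorm K d < 2 * (1/2::real)^k" using d en[of k] by auto
    then show ?thesis unfolding \<delta>_def
      by (rule someI[where P="\<lambda>d. cont_deriv_on K (e k) d \<and> supnorm K d < 2 * (1/2::real)^k"])
  qed
  define d0 where "d0 = (SOME d. cont_deriv_on K (s (r 0)) d)"
  have d0: "cont_deriv_on K (s (r 0)) d0"
    unfolding d0_def using sC[of "r 0"] C1_iff by (metis someI_ex)
  define D where "D = rec_nat d0 (\<lambda>k Dk. (\<lambda>z. Dk z + \<delta> k z))"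
  have D0: "D 0 = d0" and DS: "\<And>k. D (Suc k) = (\<lambda>z. D k z + \<delta> k z)" by (simp_all add: D_def)
  have cdk: "cont_deriv_on K (s (r k)) (D k)" for k
  proof (induction k)
    case 0 then show ?case using d0 D0 by simp
  next
    case (Suc k)
    have "s (r (Suc k)) = (\<lambda>z. s (r k) z + e k z)" unfolding e_def by auto
    then show ?case unfolding DS using cd_add[OF Suc \<delta>P[THEN conjunct1]] by simp
  qed
  have Dpt: "norm (D m z - D n z) \<le> (\<Sum>j\<in>{n..<m}. 2 * (1/2::real)^j)" if nm: "n \<le> m" and z: "z \<in> K" for n m z
    using nm
  proof (induction m rule: dec_induct)
    case base then show ?case by simp
  next
    case (step k)
    have "norm (\<delta> k z) \<le> supnorm K (\<delta> k)"
      by (rule supnorm_ge[OF cd_bounded(2)[OF K \<delta>P[THEN conjunct1]] z])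
    then have dk: "norm (\<delta> k z) \<le> 2 * (1/2::real)^k" using \<delta>P[of k] by linarith
    have "norm (D (Suc k) z - D n z) = norm ((D k z - D n z) + \<delta> k z)" unfolding DS by (simp add: algebra_simps)
    also have "\<dots> \<le> norm (D k z - D n z) + norm (\<delta> k z)" by (rule norm_triangle_ineq)
    finally show ?case using step(3) dk step(1) by (simp add: sum.atLeastLessThan_Suc)
  qed
  have supD: "supnorm K (\<lambda>z. D m z - D n z) \<le> 4 * (1/2)^n" if nm: "n \<le> m" for n m
  proof (rule supnorm_le)
    fix z assume z: "z \<in> K"
    have "(\<Sum>j\<in>{n..<m}. 2 * (1/2::real)^j) = 2 * (\<Sum>j\<in>{n..<m}. (1/2::real)^j)" by (simp add: sum_distrib_left)
    also have "\<dots> \<le> 2 * (2 * (1/2)^n)" using geom_le[of n m] by simp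
    finally show "norm (D m z - D n z) \<le> 4 * (1/2)^n" using Dpt[OF nm z] by simp
  qed simp
  have supS: "supnorm K (\<lambda>z. s (r m) z - s (r n) z) < (1/2)^n" if nm: "n \<le> m" for n m
  proof -
    have "supnorm K (\<lambda>z. s (r m) z - s (r n) z) \<le> C1norm K (\<lambda>z. s (r m) z - s (r n) z)"
      by (rule sup_le_C1[OF K C1_diff[OF sC sC]])
    also have "\<dots> < (1/2)^n" using rr[of n "r m" "r n"] rmono[OF nm] by simp
    finally show ?thesis .
  qed
  define p where "p k = (s (r k), D k)" for k
  have pJ: "p k \<in> J1 K" for k unfolding p_def J1_iff using cdk by simp
  have pc: "\<exists>M. \<forall>m\<ge>M. \<forall>n\<ge>M. J1norm K (\<lambda>x. fst (p m) x - fst (p n) x, \<lambda>x. snd (p m) x - snd (p n) x) < eps"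
    if eps: "eps > 0" for eps
  proof -
    obtain M where M: "(1/2::real)^M < eps / 5" using half_pow_small[of "eps/5"] eps by auto
    have bnd: "supnorm K (\<lambda>z. s (r m) z - s (r n) z) + supnorm K (\<lambda>z. D m z - D n z) < eps"
      if "M \<le> n" "n \<le> m" for m n
    proof -
      have "(1/2::real)^n \<le> (1/2)^M" by (rule half_pow_mono[OF that(1)])
      then show ?thesis using supS[OF that(2)] supD[OF that(2)] M by linarith
    qed
    show ?thesis
    proof (intro exI[of _ M] allI impI)
      fix m n assume m: "M \<le> m" and n: "M \<le> n"
      show "J1norm K (\<lambda>x. fst (p m) x - fst (p n) x, \<lambda>x. snd (p m) x - snd (p n) x) < eps"
      proof (cases "n \<le> m")
        case True then show ?thesis unfolding J1norm_def p_def using bnd[OF n True] by simp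
      next
        case False
        then have "m \<le> n" by simp
        then show ?thesis unfolding J1norm_def p_def using bnd[OF m] by (simp add: supnorm_commute[of K "s (r m)"] supnorm_commute[of K "D m"])
      qed
    qed
  qed
  obtain l where l: "l \<in> J1 K" and llim: "(\<lambda>n. J1norm K (\<lambda>x. fst (p n) x - fst l x, \<lambda>x. snd (p n) x - snd l x)) \<longlonglongrightarrow> 0"
    using a pJ pc unfolding J1_banach_def by blast
  define g where "g = fst l"
  have lcd: "cont_deriv_on K (fst l) (snd l)" using l J1_iff by blast
  have gC: "g \<in> C1 K" unfolding g_def C1_iff using lcd by blast
  have cmp: "C1norm K (\<lambda>x. s (r k) x - g x) \<le> J1norm K (\<lambda>x. fst (p k) x - fst l x, \<lambda>x. snd (p k) x - snd l x)" for k
    unfolding J1norm_def p_def g_def using C1norm_le[OF K cd_diff[OF cdk lcd]] by simp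
  show "\<exists>g\<in>C1 K. (\<lambda>n. C1norm K (\<lambda>x. s n x - g x)) \<longlonglongrightarrow> 0"
  proof (intro bexI[OF _ gC] LIMSEQ_I)
    fix eps :: real assume eps: "0 < eps"
    obtain K1 where K1: "\<forall>k\<ge>K1. norm (J1norm K (\<lambda>x. fst (p k) x - fst l x, \<lambda>x. snd (p k) x - snd l x) - 0) < eps / 2"
      using LIMSEQ_D[OF llim, of "eps/2"] eps by auto
    obtain K2 where K2: "(1/2::real)^K2 < eps / 2" using half_pow_small[of "eps/2"] eps by auto
    define k where "k = max K1 K2"
    have k1: "C1norm K (\<lambda>x. s (r k) x - g x) < eps / 2"
    proof -
      have "K1 \<le> k" by (simp add: k_def)
      then have "norm (J1norm K (\<lambda>x. fst (p k) x - fst l x, \<lambda>x. snd (p k) x - snd l x) - 0) < eps / 2" using K1 by blast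
      then show ?thesis using cmp[of k] by simp
    qed
    have k2: "(1/2::real)^k < eps / 2"
    proof -
      have "(1/2::real)^k \<le> (1/2)^K2" by (rule half_pow_mono) (simp add: k_def)
      then show ?thesis using K2 by linarith
    qed
    show "\<exists>no. \<forall>n\<ge>no. norm (C1norm K (\<lambda>x. s n x - g x) - 0) < eps"
    proof (intro exI[of _ "r k"] allI impI)
      fix n assume n: "r k \<le> n"
      have eq: "(\<lambda>x. s n x - g x) = (\<lambda>x. (s n x - s (r k) x) + (s (r k) x - g x))" by auto
      have "C1norm K (\<lambda>x. s n x - g x) \<le> C1norm K (\<lambda>x. s n x - s (r k) x) + C1norm K (\<lambda>x. s (r k) x - g x)"
        unfolding eq by (rule C1norm_add[OF K C1_diff[OF sC sC] C1_diff[OF sC gC]])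
      moreover have "C1norm K (\<lambda>x. s n x - s (r k) x) < (1/2)^k" using rr[of k n "r k"] n by simp
      moreover have "0 \<le> C1norm K (\<lambda>x. s n x - g x)" by (rule C1norm_nonneg[OF K C1_diff[OF sC gC]])
      ultimately show "norm (C1norm K (\<lambda>x. s n x - g x) - 0) < eps" using k1 k2 by simp
    qed
  qed
qed

lemma hump_step:
  assumes K: "compact K" and x: "x \<in> K"
    and negC: "\<And>C. C > 0 \<Longrightarrow> \<exists>f\<in>C1 K. \<exists>y\<in>K - {x}. C * C1norm K f < \<bar>f y - f x\<bar> / norm (y - x)"
    and S: "S \<in> C1 K" and rho: "\<rho> > 0"
  shows "\<exists>h y. h \<in> C1 K \<and> C1norm K h \<le> \<rho> \<and> y \<in> K - {x} \<and>
            \<bar>S y - S x\<bar> + (real k + 1) * norm (y - x) \<le> \<bar>h y - h x\<bar>"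
proof -
  obtain M where M: "\<forall>y\<in>K - {x}. \<bar>S y - S x\<bar> / norm (y - x) \<le> M" using quot_bounded[OF K S x] by blast
  define M' where "M' = max M 0"
  have M'0: "0 \<le> M'" by (simp add: M'_def)
  define C where "C = (M' + real k + 1) / \<rho>"
  have C0: "C > 0" using M'0 rho by (simp add: C_def)
  have rC: "\<rho> * C = M' + real k + 1" using rho by (simp add: C_def)
  obtain f y where f: "f \<in> C1 K" and y: "y \<in> K - {x}" and qf: "C * C1norm K f < \<bar>f y - f x\<bar> / norm (y - x)"
    using negC[OF C0] by blast
  define d where "d = norm (y - x)"
  have d0: "d > 0" using y by (simp add: d_def)
  define c where "c = C1norm K f"
  have c0: "c > 0"
  proof (rule ccontr)
    assume "\<not> c > 0"
    moreover have "0 \<le> c" unfolding c_def by (rule C1norm_nonneg[OF K f])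
    ultimately have "c = 0" by simp
    moreover have "\<bar>f y\<bar> \<le> c" "\<bar>f x\<bar> \<le> c" unfolding c_def using pt_le_C1[OF K f] y x by auto
    ultimately have "f y = 0" "f x = 0" by simp_all
    then show False using qf \<open>c = 0\<close> unfolding c_def by simp
  qed
  have qf': "C * c * d < \<bar>f y - f x\<bar>" using qf d0 unfolding c_def d_def by (simp add: pos_less_divide_eq)
  define h where "h = (\<lambda>z. (\<rho> / c) * f z)"
  have hC: "h \<in> C1 K" unfolding h_def by (rule C1_scale[OF f])
  have hn: "C1norm K h \<le> \<rho>"
  proof -
    have "C1norm K h \<le> \<bar>\<rho> / c\<bar> * C1norm K f" unfolding h_def by (rule C1norm_scale[OF K f])
    also have "\<dots> = \<rho>" using rho c0 unfolding c_def by simp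
    finally show ?thesis .
  qed
  have habs: "\<bar>h y - h x\<bar> = (\<rho> / c) * \<bar>f y - f x\<bar>"
  proof -
    have "h y - h x = (\<rho> / c) * (f y - f x)" unfolding h_def by (simp add: algebra_simps)
    then show ?thesis using rho c0 by (simp add: abs_mult)
  qed
  have "(\<rho> / c) * (C * c * d) < (\<rho> / c) * \<bar>f y - f x\<bar>"
    using qf' rho c0 by (intro mult_strict_left_mono) auto
  moreover have "(\<rho> / c) * (C * c * d) = (\<rho> * C) * d" using c0 by (simp add: field_simps)
  moreover note rC
  ultimately have big: "(M' + real k + 1) * d < \<bar>h y - h x\<bar>" using habs by simp
  have "\<bar>S y - S x\<bar> / d \<le> M" using M y unfolding d_def by blast
  then have "\<bar>S y - S x\<bar> / d \<le> M'" unfolding M'_def by simp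
  then have "\<bar>S y - S x\<bar> \<le> M' * d" using d0 by (simp add: divide_le_eq)
  then have "\<bar>S y - S x\<bar> + (real k + 1) * d \<le> \<bar>h y - h x\<bar>" using big by (simp add: algebra_simps)
  then show ?thesis using hC hn y unfolding d_def by blast
qed

lemma rho_sum:
  assumes "\<And>j. j \<in> {n..<m} \<Longrightarrow> \<rho> j \<le> B" and B: "0 \<le> B"
  shows "(\<Sum>j\<in>{n..<m}. \<rho> j / 2^(j+2)) \<le> B * (1/2::real)^n / 2"
proof -
  have "(\<Sum>j\<in>{n..<m}. \<rho> j / 2^(j+2)) \<le> (\<Sum>j\<in>{n..<m}. (B / 4) * (1/2::real)^j)"
  proof (rule sum_mono)
    fix j assume j: "j \<in> {n..<m}"
    have "\<rho> j / 2^(j+2) = \<rho> j * ((1/2::real)^j / 4)" by (simp add: power_add field_simps)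
    also have "\<dots> \<le> B * ((1/2::real)^j / 4)" using assms(1)[OF j] by (intro mult_right_mono) auto
    finally show "\<rho> j / 2^(j+2) \<le> (B / 4) * (1/2::real)^j" by simp
  qed
  also have "\<dots> = (B / 4) * (\<Sum>j\<in>{n..<m}. (1/2::real)^j)" by (simp add: sum_distrib_left)
  also have "\<dots> \<le> (B / 4) * (2 * (1/2)^n)" using B geom_le[of n m] by (intro mult_left_mono) auto
  finally show ?thesis by simp
qed

lemma b_imp_c:
  assumes K: "compact K" and b: "C1_banach K"
  shows "\<forall>x\<in>K. \<exists>C>0. \<forall>f\<in>C1 K. \<forall>y\<in>K - {x}. \<bar>f y - f x\<bar> / norm (y - x) \<le> C * C1norm K f"
proof (rule ballI, rule ccontr)
  fix x assume x: "x \<in> K"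
    and neg: "\<not> (\<exists>C>0. \<forall>f\<in>C1 K. \<forall>y\<in>K - {x}. \<bar>f y - f x\<bar> / norm (y - x) \<le> C * C1norm K f)"
  have negC: "\<exists>f\<in>C1 K. \<exists>y\<in>K - {x}. C * C1norm K f < \<bar>f y - f x\<bar> / norm (y - x)" if "C > 0" for C
    using neg that by (auto simp: not_le)
  define P where "P S e k h y \<longleftrightarrow> h \<in> C1 K \<and> C1norm K h \<le> e \<and> y \<in> K - {x} \<and>
            \<bar>S y - S x\<bar> + (real k + 1) * norm (y - x) \<le> \<bar>h y - h x\<bar>"
    for S :: "'a \<Rightarrow> real" and e :: real and k :: nat and h :: "'a \<Rightarrow> real" and y :: 'a
  define HY where "HY S e k = (SOME hy. P S e k (fst hy) (snd hy))" for S e k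
  have HY: "P S e k (fst (HY S e k)) (snd (HY S e k))" if hS: "S \<in> C1 K" and he: "e > 0" for S e k
  proof -
    obtain h y where "P S e k h y" using hump_step[OF K x negC hS he, of k] unfolding P_def by blast
    then have "\<exists>hy. P S e k (fst hy) (snd hy)" by (intro exI[of _ "(h, y)"]) simp
    then show ?thesis unfolding HY_def by (rule someI_ex)
  qed
  define st where "st = rec_nat ((\<lambda>z::'a. 0::real), 1::real)
      (\<lambda>k p. ((\<lambda>z. fst p z + fst (HY (fst p) (snd p / 2^(k+2)) k) z),
               min (snd p) (norm (snd (HY (fst p) (snd p / 2^(k+2)) k) - x))))"
  define S where "S k = fst (st k)" for k
  define \<rho> where "\<rho> k = snd (st k)" for k
  define hh where "hh k = fst (HY (S k) (\<rho> k / 2^(k+2)) k)" for k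
  define yy where "yy k = snd (HY (S k) (\<rho> k / 2^(k+2)) k)" for k
  have S0: "S 0 = (\<lambda>z. 0)" and r0: "\<rho> 0 = 1" by (simp_all add: S_def \<rho>_def st_def)
  have SS: "S (Suc k) = (\<lambda>z. S k z + hh k z)" for k
    by (simp add: S_def \<rho>_def hh_def st_def)
  have rS: "\<rho> (Suc k) = min (\<rho> k) (norm (yy k - x))" for k
    by (simp add: S_def \<rho>_def yy_def st_def)
  have inv: "S k \<in> C1 K \<and> 0 < \<rho> k" for k
  proof (induction k)
    case 0 show ?case unfolding S0 r0 C1_iff using cd_zero by auto
  next
    case (Suc k)
    have p: "P (S k) (\<rho> k / 2^(k+2)) k (hh k) (yy k)" unfolding hh_def yy_def
      by (rule HY) (use Suc in auto)
    then have "hh k \<in> C1 K" "yy k \<in> K - {x}" unfolding P_def by auto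
    then show ?case unfolding SS rS using Suc C1_add by auto
  qed
  have SC: "S k \<in> C1 K" and rpos: "0 < \<rho> k" for k using inv by auto
  have PP: "P (S k) (\<rho> k / 2^(k+2)) k (hh k) (yy k)" for k unfolding hh_def yy_def
    by (rule HY) (use SC rpos in auto)
  have hC: "hh k \<in> C1 K" and hn: "C1norm K (hh k) \<le> \<rho> k / 2^(k+2)" and yK: "yy k \<in> K - {x}"
    and hb: "\<bar>S k (yy k) - S k x\<bar> + (real k + 1) * norm (yy k - x) \<le> \<bar>hh k (yy k) - hh k x\<bar>" for k
    using PP[of k] unfolding P_def by auto
  have rmono: "\<rho> m \<le> \<rho> n" if "n \<le> m" for n m
    by (rule lift_Suc_antimono_le[of \<rho>, OF _ that]) (simp add: rS)
  have r1: "\<rho> k \<le> 1" for k using rmono[of 0 k] r0 by simp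
  have ry: "\<rho> j \<le> norm (yy k - x)" if "Suc k \<le> j" for j k
    using rmono[OF that] rS[of k] by simp
  have tele: "C1norm K (\<lambda>z. S m z - S n z) \<le> (\<Sum>j\<in>{n..<m}. \<rho> j / 2^(j+2))" if "n \<le> m" for n m
  proof -
    have "C1norm K (\<lambda>z. S m z - S n z) \<le> (\<Sum>j\<in>{n..<m}. C1norm K (hh j))"
      by (rule tele_norm[of K S hh n m, OF K SC hC SS that])
    also have "\<dots> \<le> (\<Sum>j\<in>{n..<m}. \<rho> j / 2^(j+2))" by (rule sum_mono) (rule hn)
    finally show ?thesis .
  qed
  have cauchy1: "C1norm K (\<lambda>z. S m z - S n z) < (1/2)^n" if "n \<le> m" for n m
  proof -
    have "(\<Sum>j\<in>{n..<m}. \<rho> j / 2^(j+2)) \<le> 1 * (1/2::real)^n / 2"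
      by (rule rho_sum) (auto intro: r1)
    moreover have "(0::real) < (1/2)^n" by simp
    ultimately show ?thesis using tele[OF that] by linarith
  qed
  have "\<exists>g\<in>C1 K. (\<lambda>n. C1norm K (\<lambda>x. S n x - g x)) \<longlonglongrightarrow> 0"
  proof (rule b[unfolded C1_banach_def, rule_format], intro conjI allI impI)
    show "S n \<in> C1 K" for n by (rule SC)
    fix e :: real assume e: "0 < e"
    obtain M where M: "(1/2::real)^M < e" using half_pow_small[OF e] by blast
    show "\<exists>N. \<forall>m\<ge>N. \<forall>n\<ge>N. C1norm K (\<lambda>x. S m x - S n x) < e"
    proof (intro exI[of _ M] allI impI)
      fix m n assume m: "M \<le> m" and n: "M \<le> n"
      show "C1norm K (\<lambda>x. S m x - S n x) < e"
      proof (cases "n \<le> m")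
        case True
        then show ?thesis using cauchy1[OF True] half_pow_mono[OF n] M by linarith
      next
        case False
        then have mn: "m \<le> n" by simp
        have "C1norm K (\<lambda>x. S m x - S n x) = C1norm K (\<lambda>x. S n x - S m x)"
          by (rule C1norm_commute[OF K SC SC])
        then show ?thesis using cauchy1[OF mn] half_pow_mono[OF m] M by linarith
      qed
    qed
  qed
  then obtain g where gC: "g \<in> C1 K" and glim: "(\<lambda>n. C1norm K (\<lambda>x. S n x - g x)) \<longlonglongrightarrow> 0" by blast
  have ptc: "(\<lambda>n. S n z) \<longlonglongrightarrow> g z" if z: "z \<in> K" for z
  proof (rule LIMSEQ_I)
    fix r :: real assume rp: "0 < r"
    obtain N where N: "\<forall>n\<ge>N. norm (C1norm K (\<lambda>x. S n x - g x) - 0) < r" using LIMSEQ_D[OF glim rp] by blast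
    show "\<exists>no. \<forall>n\<ge>no. norm (S n z - g z) < r"
    proof (intro exI[of _ N] allI impI)
      fix n assume n: "N \<le> n"
      have "\<bar>S n z - g z\<bar> \<le> C1norm K (\<lambda>x. S n x - g x)"
        using pt_le_C1[OF K C1_diff[OF SC gC] z] by simp
      then show "norm (S n z - g z) < r" using N n by auto
    qed
  qed
  obtain Mg where Mg: "\<forall>y\<in>K - {x}. \<bar>g y - g x\<bar> / norm (y - x) \<le> Mg" using quot_bounded[OF K gC x] by blast
  define k where "k = nat \<lceil>Mg\<rceil> + 1"
  have kM: "Mg < real k" unfolding k_def using real_nat_ceiling_ge[of Mg] by simp
  define y where "y = yy k"
  define d where "d = norm (y - x)"
  have yk: "y \<in> K - {x}" unfolding y_def by (rule yK)
  have d0: "d > 0" using yk by (simp add: d_def)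
  have A: "(real k + 1) * d \<le> \<bar>S (Suc k) y - S (Suc k) x\<bar>"
  proof -
    have "\<bar>S (Suc k) y - S (Suc k) x\<bar> = \<bar>(S k y - S k x) + (hh k y - hh k x)\<bar>" unfolding SS by (simp add: algebra_simps)
    moreover have "\<bar>(S k y - S k x) + (hh k y - hh k x)\<bar> \<ge> \<bar>hh k y - hh k x\<bar> - \<bar>S k y - S k x\<bar>" by linarith
    ultimately show ?thesis using hb[of k] unfolding y_def d_def by linarith
  qed
  have B: "real k \<le> \<bar>S n y - S n x\<bar> / d" if n: "Suc k \<le> n" for n
  proof -
    have t: "C1norm K (\<lambda>z. S n z - S (Suc k) z) \<le> d * (1/2::real)^(Suc k) / 2"
    proof -
      have "(\<Sum>j\<in>{Suc k..<n}. \<rho> j / 2^(j+2)) \<le> d * (1/2::real)^(Suc k) / 2"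
        by (rule rho_sum) (use ry d0 in \<open>auto simp: d_def y_def\<close>)
      then show ?thesis using tele[OF n] by linarith
    qed
    have "(1/2::real)^(Suc k) \<le> 1" by (rule power_le_one) auto
    then have t2: "C1norm K (\<lambda>z. S n z - S (Suc k) z) \<le> d / 2" using t d0
      by (smt (verit, best) divide_right_mono mult_left_le)
    have "\<bar>S n y - S (Suc k) y\<bar> \<le> C1norm K (\<lambda>z. S n z - S (Suc k) z)"
      using pt_le_C1[OF K C1_diff[OF SC SC]] yk by auto
    moreover have "\<bar>S n x - S (Suc k) x\<bar> \<le> C1norm K (\<lambda>z. S n z - S (Suc k) z)"
      using pt_le_C1[OF K C1_diff[OF SC SC] x] by simp
    ultimately have "real k * d \<le> \<bar>S n y - S n x\<bar>" using A t2 by (simp add: algebra_simps)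
    then show ?thesis using d0 by (simp add: le_divide_eq)
  qed
  have "(\<lambda>n. \<bar>S n y - S n x\<bar> / d) \<longlonglongrightarrow> \<bar>g y - g x\<bar> / d"
    using yk x d0 by (intro tendsto_intros ptc) auto
  then have "real k \<le> \<bar>g y - g x\<bar> / d"
    by (rule LIMSEQ_le_const) (use B in blast)
  moreover have "\<bar>g y - g x\<bar> / d \<le> Mg" using Mg yk unfolding d_def by blast
  ultimately show False using kM by linarith
qed

theorem mainTheorem7:
  fixes K :: "'a::euclidean_space set"
  assumes "compact K"
  shows "(J1_banach K \<longleftrightarrow> C1_banach K) \<and>
         (C1_banach K \<longleftrightarrow>
           (\<forall>x\<in>K. \<exists>C>0. \<forall>f\<in>C1 K. \<forall>y\<in>K - {x}.
              \<bar>f y - f x\<bar> / norm (y - x) \<le> C * C1norm K f))"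
  using a_imp_b[OF assms] b_imp_c[OF assms] c_imp_a[OF assms] by blast

end
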